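(* Let $N\ge3$ and let $\Omega,\chi\in L^2(\mathbb{R}^{2N},\mathbb{C})$ be symmetric with respect to exchange of the variables $x_2,\dots,x_N$. Let $O_{1,2}$ be an operator acting on the first and second coordinates, and for $j\ge2$ let $O_{1,j}$ denote the corresponding operator acting in the same way on the first and $j$-th coordinates. Then $$|\langle\!\langle\Omega,O_{1,2}\chi\rangle\!\rangle|\le\|\Omega\|^2+|\langle\!\langle O_{1,2}\chi,O_{1,3}\chi\rangle\!\rangle|+\frac{1}{N-1}\|O_{1,2}\chi\|^2.$$
   Context: $\langle\!\langle\cdot,\cdot\rangle\!\rangle$ denotes the scalar product on $L^2(\mathbb{R}^{2N},\mathbb{C})$, with variables $x_1,\dots,x_N\in\mathbb{R}^2$; $\chi$ is assumed in the domain of the operators $O_{1,j}$. *)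

theory Defs
  imports "HOL-Analysis.Analysis" "HOL-Combinatorics.Transposition"
begin

(* Configuration space R^{2N}: N particles x_i \<in> R^2, indexed by a finite type 'n, CARD('n) = N *)
type_synonym 'n cfg = "real^2^'n"

definition relabel :: "('n::finite \<Rightarrow> 'n) \<Rightarrow> 'n cfg \<Rightarrow> 'n cfg" where
  "relabel s x = (\<chi> i. x $ s i)"

definition L2 :: "('n::finite cfg \<Rightarrow> complex) set" where
  "L2 = {f. f \<in> borel_measurable lborel \<and> integrable lborel (\<lambda>x. (cmod (f x))^2)}"

definition ip :: "('n::finite cfg \<Rightarrow> complex) \<Rightarrow> ('n cfg \<Rightarrow> complex) \<Rightarrow> complex" where
  "ip f g = (\<integral>x. cnj (f x) * g x \<partial>lborel)"

definition nrm :: "('n::finite cfg \<Rightarrow> complex) \<Rightarrow> real" where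
  "nrm f = sqrt (\<integral>x. (cmod (f x))^2 \<partial>lborel)"

definition sym_except :: "'n::finite \<Rightarrow> ('n cfg \<Rightarrow> complex) \<Rightarrow> bool" where
  "sym_except a f \<longleftrightarrow>
     (\<forall>s. s permutes (UNIV - {a}) \<longrightarrow> (AE x in lborel. f (relabel s x) = f x))"

(* O is an operator on functions of the configuration that acts only on the variables x_a, x_b:
   it is well defined on L^2 classes and commutes with relabellings of the remaining variables *)
definition acts_on :: "'n::finite \<Rightarrow> 'n \<Rightarrow> (('n cfg \<Rightarrow> complex) \<Rightarrow> ('n cfg \<Rightarrow> complex)) \<Rightarrow> bool" where
  "acts_on a b T \<longleftrightarrow>
     (\<forall>f g. (AE x in lborel. f x = g x) \<longrightarrow> (AE x in lborel. T f x = T g x)) \<and>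
     (\<forall>s f. s permutes (UNIV - {a, b}) \<longrightarrow>
        (AE x in lborel. T (f \<circ> relabel s) x = T f (relabel s x)))"

(* O_{1,j}: the operator acting on (x_1, x_j) in the same way as O = O_{1,2} acts on (x_1, x_2),
   obtained by conjugating with the exchange x_2 <-> x_j  (b plays the role of index 2) *)
definition op_1j :: "'n::finite \<Rightarrow> (('n cfg \<Rightarrow> complex) \<Rightarrow> ('n cfg \<Rightarrow> complex)) \<Rightarrow> 'n
                     \<Rightarrow> ('n cfg \<Rightarrow> complex) \<Rightarrow> ('n cfg \<Rightarrow> complex)" where
  "op_1j b T j f = T (f \<circ> relabel (Transposition.transpose b j)) \<circ> relabel (Transposition.transpose b j)"

end

theory Submission
  imports Defs
begin


lemma relabel_comp: "relabel p (relabel q x) = relabel (q \<circ> p) x"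
  by (simp add: relabel_def vec_eq_iff)

lemma relabel_id: "relabel id x = x"
  by (simp add: relabel_def vec_eq_iff)

lemma linear_relabel: "linear (relabel s)"
  by (auto simp: linear_iff relabel_def vec_eq_iff)

lemma relabel_meas: "relabel s \<in> measurable lborel lborel"
proof -
  have "continuous_on UNIV (relabel s)"
    using linear_relabel linear_continuous_on linear_conv_bounded_linear by blast
  then show ?thesis by (simp add: borel_measurable_continuous_onI)
qed

lemma relabel_inner:
  assumes p: "p permutes UNIV"
  shows "relabel p x \<bullet> y = x \<bullet> relabel (inv p) (y :: 'n::finite cfg)"
proof -
  have "(\<Sum>k\<in>UNIV. x $ k \<bullet> y $ inv p k) = (\<Sum>i\<in>UNIV. x $ p i \<bullet> y $ inv p (p i))"
    using sum.permute[OF p, of "\<lambda>k. x $ k \<bullet> y $ inv p k"] by (simp add: o_def)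
  also have "\<dots> = (\<Sum>i\<in>UNIV. x $ p i \<bullet> y $ i)"
    using permutes_inverses(2)[OF p] by simp
  finally show ?thesis by (simp add: inner_vec_def relabel_def)
qed

lemma relabel_axis:
  assumes p: "p permutes UNIV"
  shows "relabel p (axis i e) = axis (inv p i) e"
  using permutes_inverses[OF p] by (auto simp: relabel_def axis_def vec_eq_iff)

lemma relabel_Basis:
  assumes p: "p permutes UNIV"
  shows "bij_betw (relabel p) (Basis :: 'n::finite cfg set) Basis"
proof (rule bij_betw_imageI)
  show "inj_on (relabel p) (Basis :: 'n::finite cfg set)"
  proof (rule inj_onI)
    fix x y :: "'n cfg" assume "relabel p x = relabel p y"
    then have "relabel (inv p) (relabel p x) = relabel (inv p) (relabel p y)" by simp
    then show "x = y" by (simp add: relabel_comp permutes_inv_o(1)[OF p] relabel_id)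
  qed
  show "relabel p ` Basis = (Basis :: 'n::finite cfg set)"
  proof
    show "relabel p ` Basis \<subseteq> (Basis :: 'n::finite cfg set)"
      by (fastforce simp: Basis_vec_def relabel_axis[OF p])
    show "(Basis :: 'n::finite cfg set) \<subseteq> relabel p ` Basis"
    proof
      fix b :: "'n cfg" assume "b \<in> Basis"
      then obtain i e where b: "b = axis i e" "e \<in> Basis" by (auto simp: Basis_vec_def)
      have "b = relabel p (axis (p i) e)"
        using b permutes_inverses(2)[OF p] by (simp add: relabel_axis[OF p])
      moreover have "axis (p i) e \<in> (Basis :: 'n::finite cfg set)"
        using b by (auto simp: Basis_vec_def)
      ultimately show "b \<in> relabel p ` Basis" by blast
    qed
  qed
qed

lemma distr_relabel:
  assumes s: "s permutes UNIV"
  shows "distr lborel lborel (relabel s) = (lborel :: 'n::finite cfg measure)"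
proof (rule lborel_eqI[symmetric])
  fix l u :: "'n cfg"
  assume le: "\<And>b. b \<in> Basis \<Longrightarrow> l \<bullet> b \<le> u \<bullet> b"
  let ?R' = "relabel (inv s) :: 'n cfg \<Rightarrow> 'n cfg"
  let ?R = "relabel s :: 'n cfg \<Rightarrow> 'n cfg"
  have is': "inv s permutes UNIV" using s by (simp add: permutes_inv)
  have invinv: "inv (inv s) = s" using s by (simp add: permutes_inv_inv)
  have i1: "?R x \<bullet> y = x \<bullet> ?R' y" for x y using relabel_inner[OF s] .
  have i2: "?R' x \<bullet> y = x \<bullet> ?R y" for x y using relabel_inner[OF is'] invinv by simp
  have bR: "bij_betw ?R Basis Basis" by (rule relabel_Basis[OF s])
  have bR': "bij_betw ?R' Basis Basis" by (rule relabel_Basis[OF is'])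
  have RR': "?R (?R' x) = x" for x
    by (simp add: relabel_comp permutes_inv_o(2)[OF s] relabel_id)
  have pre: "?R -` box l u = box (?R' l) (?R' u)"
  proof -
    have "x \<in> ?R -` box l u \<longleftrightarrow> x \<in> box (?R' l) (?R' u)" for x
    proof -
      have "x \<in> ?R -` box l u \<longleftrightarrow> (\<forall>b\<in>Basis. l \<bullet> b < x \<bullet> ?R' b \<and> x \<bullet> ?R' b < u \<bullet> b)"
        by (simp add: box_def i1)
      also have "\<dots> \<longleftrightarrow> (\<forall>c\<in>Basis. l \<bullet> ?R c < x \<bullet> c \<and> x \<bullet> c < u \<bullet> ?R c)"
      proof
        assume H: "\<forall>b\<in>Basis. l \<bullet> b < x \<bullet> ?R' b \<and> x \<bullet> ?R' b < u \<bullet> b"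
        show "\<forall>c\<in>Basis. l \<bullet> ?R c < x \<bullet> c \<and> x \<bullet> c < u \<bullet> ?R c"
        proof
          fix c :: "'n cfg" assume c: "c \<in> Basis"
          then have "?R c \<in> Basis" using bR bij_betwE by blast
          moreover have "?R' (?R c) = c"
            by (simp add: relabel_comp permutes_inv_o(1)[OF s] relabel_id)
          ultimately show "l \<bullet> ?R c < x \<bullet> c \<and> x \<bullet> c < u \<bullet> ?R c" using H by metis
        qed
      next
        assume H: "\<forall>c\<in>Basis. l \<bullet> ?R c < x \<bullet> c \<and> x \<bullet> c < u \<bullet> ?R c"
        show "\<forall>b\<in>Basis. l \<bullet> b < x \<bullet> ?R' b \<and> x \<bullet> ?R' b < u \<bullet> b"
        proof
          fix b :: "'n cfg" assume b: "b \<in> Basis"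
          then have "?R' b \<in> Basis" using bR' bij_betwE by blast
          then show "l \<bullet> b < x \<bullet> ?R' b \<and> x \<bullet> ?R' b < u \<bullet> b" using H RR' by metis
        qed
      qed
      also have "\<dots> \<longleftrightarrow> x \<in> box (?R' l) (?R' u)"
        by (simp add: box_def i2)
      finally show ?thesis .
    qed
    then show ?thesis by blast
  qed
  have le': "\<And>c. c \<in> Basis \<Longrightarrow> ?R' l \<bullet> c \<le> ?R' u \<bullet> c"
  proof -
    fix c :: "'n cfg" assume "c \<in> Basis"
    then have "?R c \<in> Basis" using bR bij_betwE by blast
    then show "?R' l \<bullet> c \<le> ?R' u \<bullet> c" using le by (simp add: i2)
  qed
  have "emeasure lborel (?R -` box l u) = (\<Prod>c\<in>Basis. (?R' u - ?R' l) \<bullet> c)"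
    using le' pre by (simp add: inner_diff_left)
  also have "\<dots> = (\<Prod>c\<in>Basis. (u - l) \<bullet> ?R c)"
    by (simp add: i2 inner_diff_left)
  also have "\<dots> = (\<Prod>b\<in>Basis. (u - l) \<bullet> b)"
    using prod.reindex_bij_betw[OF bR, of "\<lambda>b. (u - l) \<bullet> b"] by simp
  finally show "emeasure (distr lborel lborel (relabel s)) (box l u) = (\<Prod>b\<in>Basis. (u - l) \<bullet> b)"
    using relabel_meas[of s] by (simp add: emeasure_distr)
qed simp


lemma AE_relabel:
  assumes s: "s permutes UNIV" and P: "AE x in lborel. P x"
  shows "AE x in (lborel :: 'n::finite cfg measure). P (relabel s x)"
proof -
  have "AE x in distr lborel lborel (relabel s). P x" unfolding distr_relabel[OF s] by (rule P)
  then show ?thesis by (rule AE_distrD[OF relabel_meas])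
qed

lemma meas_relabel:
  assumes "f \<in> borel_measurable lborel"
  shows "(\<lambda>x. f (relabel s x)) \<in> borel_measurable (lborel :: 'n::finite cfg measure)"
  using measurable_comp[OF relabel_meas assms] by (simp add: o_def)

lemma meas_prod:
  fixes f g :: "'n::finite cfg \<Rightarrow> complex"
  assumes "f \<in> borel_measurable lborel" "g \<in> borel_measurable lborel"
  shows "(\<lambda>x. cnj (f x) * g x) \<in> borel_measurable lborel"
proof -
  have c: "cnj \<in> borel_measurable borel"
    by (intro borel_measurable_continuous_onI continuous_intros)
  have "(\<lambda>x. cnj (f x)) \<in> borel_measurable lborel"
    using measurable_compose[OF assms(1) c] .
  then show ?thesis using assms(2) by (rule borel_measurable_times)
qed

lemma ip_relabel:
  fixes f g :: "'n::finite cfg \<Rightarrow> complex"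
  assumes s: "s permutes UNIV" and f: "f \<in> borel_measurable lborel" and g: "g \<in> borel_measurable lborel"
  shows "ip (\<lambda>x. f (relabel s x)) (\<lambda>x. g (relabel s x)) = ip f g"
proof -
  have h: "(\<lambda>x. cnj (f x) * g x) \<in> borel_measurable lborel" by (rule meas_prod[OF f g])
  have "integral\<^sup>L (distr lborel lborel (relabel s)) (\<lambda>x. cnj (f x) * g x)
        = (\<integral>x. cnj (f (relabel s x)) * g (relabel s x) \<partial>lborel)"
    by (rule integral_distr[OF relabel_meas h])
  then show ?thesis using distr_relabel[OF s] by (simp add: ip_def)
qed

lemma ip_cong:
  fixes f g f' g' :: "'n::finite cfg \<Rightarrow> complex"
  assumes "f \<in> borel_measurable lborel" "g \<in> borel_measurable lborel"
    "f' \<in> borel_measurable lborel" "g' \<in> borel_measurable lborel"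
    "AE x in lborel. f x = f' x" "AE x in lborel. g x = g' x"
  shows "ip f g = ip f' g'"
proof -
  show ?thesis unfolding ip_def
    by (rule integral_cong_AE[OF meas_prod[OF assms(1,2)] meas_prod[OF assms(3,4)]])
       (use assms(5,6) in eventually_elim, simp)
qed

lemma L2_meas: "f \<in> L2 \<Longrightarrow> f \<in> borel_measurable lborel"
  by (simp add: L2_def)

lemma L2_int: "f \<in> L2 \<Longrightarrow> integrable lborel (\<lambda>x. (cmod (f x))^2)"
  by (simp add: L2_def)

lemma prod_bound: "(a::real) \<ge> 0 \<Longrightarrow> b \<ge> 0 \<Longrightarrow> a * b \<le> a^2 + b^2"
proof -
  assume "a \<ge> 0" "b \<ge> 0"
  have "0 \<le> (a - b)^2" by simp
  then have "2 * a * b \<le> a^2 + b^2" by (simp add: power2_diff)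
  moreover have "0 \<le> a * b" using \<open>a \<ge> 0\<close> \<open>b \<ge> 0\<close> by simp
  ultimately show ?thesis by linarith
qed

lemma L2_prod_int:
  fixes f g :: "'n::finite cfg \<Rightarrow> complex"
  assumes "f \<in> L2" "g \<in> L2"
  shows "integrable lborel (\<lambda>x. cnj (f x) * g x)"
proof -
  have i: "integrable lborel (\<lambda>x. (cmod (f x))^2 + (cmod (g x))^2)"
    by (rule Bochner_Integration.integrable_add[OF L2_int[OF assms(1)] L2_int[OF assms(2)]])
  have m: "(\<lambda>x. cnj (f x) * g x) \<in> borel_measurable lborel"
    by (rule meas_prod[OF L2_meas[OF assms(1)] L2_meas[OF assms(2)]])
  have "AE x in lborel. norm (cnj (f x) * g x) \<le> norm ((cmod (f x))^2 + (cmod (g x))^2)"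
  proof (intro AE_I2)
    fix x
    have "norm (cnj (f x) * g x) = cmod (f x) * cmod (g x)" by (simp add: norm_mult)
    also have "\<dots> \<le> (cmod (f x))^2 + (cmod (g x))^2" by (rule prod_bound) simp_all
    also have "\<dots> = norm ((cmod (f x))^2 + (cmod (g x))^2)" by simp
    finally show "norm (cnj (f x) * g x) \<le> norm ((cmod (f x))^2 + (cmod (g x))^2)" .
  qed
  then show ?thesis by (rule Bochner_Integration.integrable_bound[OF i m])
qed

lemma ip_self: "f \<in> L2 \<Longrightarrow> ip f f = complex_of_real (\<integral>x. (cmod (f x))^2 \<partial>lborel)"
proof -
  have *: "cnj (f x) * f x = complex_of_real ((cmod (f x))^2)" for x
    by (metis complex_norm_square mult.commute of_real_power)
  show ?thesis unfolding ip_def by (simp only: *) (rule integral_complex_of_real)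
qed

lemma nrm_sq: "(nrm f)^2 = (\<integral>x. (cmod (f x))^2 \<partial>lborel)"
  by (simp add: nrm_def)



lemma relabel_id': "relabel id = id"
  by (rule ext) (simp add: relabel_id)

lemma perm_fix: "q permutes S \<Longrightarrow> q b = b \<Longrightarrow> q permutes S - {b}"
  by (auto simp: permutes_def)

theorem lemma7:
  fixes a b c :: "'n::finite"
    and Omega Chi :: "'n cfg \<Rightarrow> complex"
    and T :: "('n cfg \<Rightarrow> complex) \<Rightarrow> ('n cfg \<Rightarrow> complex)"
  assumes "CARD('n) \<ge> 3"
    and "a \<noteq> b" "a \<noteq> c" "b \<noteq> c"
    and "Omega \<in> L2" "Chi \<in> L2"
    and "sym_except a Omega" "sym_except a Chi"
    and "acts_on a b T"
    and "\<forall>j. j \<noteq> a \<longrightarrow> op_1j b T j Chi \<in> L2"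
  shows "cmod (ip Omega (op_1j b T b Chi))
           \<le> (nrm Omega)^2 + cmod (ip (op_1j b T b Chi) (op_1j b T c Chi))
             + (nrm (op_1j b T b Chi))^2 / (real CARD('n) - 1)"
proof -
  define J where "J = (UNIV :: 'n set) - {a}"
  define Q where "Q j = op_1j b T j Chi" for j
  define TC where "TC = T Chi"
  define X where "X = ip TC (Q c)"
  have bJ: "b \<in> J" "c \<in> J" using assms(2,3) by (auto simp: J_def)
  have Qb: "Q b = TC" by (simp add: Q_def op_1j_def TC_def relabel_id')
  have QL2: "j \<in> J \<Longrightarrow> Q j \<in> L2" for j using assms(10) by (auto simp: J_def Q_def)
  have TCL2: "TC \<in> L2" using QL2[OF bJ(1)] Qb by simp
  have Qm: "j \<in> J \<Longrightarrow> Q j \<in> borel_measurable lborel" for j using QL2 L2_meas by blast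
  have TCm: "TC \<in> borel_measurable lborel" using TCL2 L2_meas by blast
  have Om: "Omega \<in> borel_measurable lborel" using assms(5) L2_meas by blast
  have permJ: "q permutes J \<Longrightarrow> q permutes UNIV" for q
    by (erule permutes_subset) simp
  have tJ: "Transposition.transpose i k permutes J" if "i \<in> J" "k \<in> J" for i k
    using that by (rule permutes_swap_id)
  have symC: "AE x in lborel. Chi (relabel q x) = Chi x" if "q permutes J" for q
    using assms(8) that unfolding sym_except_def J_def by blast
  have symO: "AE x in lborel. Omega (relabel q x) = Omega x" if "q permutes J" for q
    using assms(7) that unfolding sym_except_def J_def by blast
  have A1: "\<And>f g. (AE x in lborel. f x = g x) \<Longrightarrow> (AE x in lborel. T f x = T g x)"
    using assms(9) unfolding acts_on_def by blast
  have A2: "\<And>s f. s permutes (UNIV - {a, b}) \<Longrightarrow>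
        (AE x in lborel. T (f \<circ> relabel s) x = T f (relabel s x))"
    using assms(9) unfolding acts_on_def by blast
  have TCinv: "AE x in lborel. TC (relabel q x) = TC x" if q: "q permutes UNIV - {a, b}" for q
  proof -
    have "q permutes J" by (rule permutes_subset[OF q]) (auto simp: J_def)
    then have "AE x in lborel. (Chi \<circ> relabel q) x = Chi x" using symC by (simp add: o_def)
    then have 1: "AE x in lborel. T (Chi \<circ> relabel q) x = T Chi x" by (rule A1)
    have 2: "AE x in lborel. T (Chi \<circ> relabel q) x = TC (relabel q x)"
      using A2[OF q] by (simp add: TC_def)
    from 1 2 show ?thesis by eventually_elim (simp add: TC_def)
  qed
  have LemA: "AE x in lborel. Q j x = TC (relabel p x)"
    if p: "p permutes J" and j: "j \<in> J" and pb: "p b = j" for p j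
  proof -
    define \<tau> where "\<tau> = Transposition.transpose b j"
    have tau: "\<tau> permutes J" unfolding \<tau>_def by (rule tJ[OF bJ(1) j])
    have tauU: "\<tau> permutes UNIV" using permJ[OF tau] .
    have "AE x in lborel. (Chi \<circ> relabel \<tau>) x = Chi x" using symC[OF tau] by (simp add: o_def)
    then have "AE y in lborel. T (Chi \<circ> relabel \<tau>) y = TC y" unfolding TC_def by (rule A1)
    then have 1: "AE x in lborel. T (Chi \<circ> relabel \<tau>) (relabel \<tau> x) = TC (relabel \<tau> x)"
      by (rule AE_relabel[OF tauU])
    have Qj: "Q j x = T (Chi \<circ> relabel \<tau>) (relabel \<tau> x)" for x
      by (simp add: Q_def op_1j_def \<tau>_def)
    define q where "q = \<tau> \<circ> p"
    have qJ: "q permutes J" unfolding q_def by (rule permutes_compose[OF p tau])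
    have qb: "q b = b" by (simp add: q_def pb \<tau>_def)
    have "q permutes J - {b}" by (rule perm_fix[OF qJ qb])
    moreover have "J - {b} = UNIV - {a, b}" by (auto simp: J_def)
    ultimately have qab: "q permutes UNIV - {a, b}" by simp
    have "AE x in lborel. TC (relabel q (relabel \<tau> x)) = TC (relabel \<tau> x)"
      by (rule AE_relabel[OF tauU TCinv[OF qab]])
    moreover have "relabel q (relabel \<tau> x) = relabel p x" for x
    proof -
      have "\<tau> \<circ> q = p" unfolding q_def \<tau>_def by (rule ext) simp
      then show ?thesis by (simp add: relabel_comp)
    qed
    ultimately have 2: "AE x in lborel. TC (relabel p x) = TC (relabel \<tau> x)" by simp
    from 1 2 show ?thesis by eventually_elim (simp add: Qj)
  qed
  have IPO: "ip Omega (Q j) = ip Omega TC" if j: "j \<in> J" for j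
  proof -
    define \<tau> where "\<tau> = Transposition.transpose b j"
    have tau: "\<tau> permutes J" unfolding \<tau>_def by (rule tJ[OF bJ(1) j])
    have tauU: "\<tau> permutes UNIV" using permJ[OF tau] .
    have 1: "AE x in lborel. Q j x = TC (relabel \<tau> x)"
      by (rule LemA[OF tau j]) (simp add: \<tau>_def)
    have 2: "AE x in lborel. Omega x = Omega (relabel \<tau> x)"
      using symO[OF tau] by eventually_elim simp
    have "ip Omega (Q j) = ip (\<lambda>x. Omega (relabel \<tau> x)) (\<lambda>x. TC (relabel \<tau> x))"
      by (rule ip_cong[OF Om Qm[OF j] meas_relabel[OF Om] meas_relabel[OF TCm] 2 1])
    also have "\<dots> = ip Omega TC" by (rule ip_relabel[OF tauU Om TCm])
    finally show ?thesis .
  qed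
  have IPd: "ip (Q j) (Q j) = ip TC TC" if j: "j \<in> J" for j
  proof -
    define \<tau> where "\<tau> = Transposition.transpose b j"
    have tau: "\<tau> permutes J" unfolding \<tau>_def by (rule tJ[OF bJ(1) j])
    have tauU: "\<tau> permutes UNIV" using permJ[OF tau] .
    have 1: "AE x in lborel. Q j x = TC (relabel \<tau> x)"
      by (rule LemA[OF tau j]) (simp add: \<tau>_def)
    have "ip (Q j) (Q j) = ip (\<lambda>x. TC (relabel \<tau> x)) (\<lambda>x. TC (relabel \<tau> x))"
      by (rule ip_cong[OF Qm[OF j] Qm[OF j] meas_relabel[OF TCm] meas_relabel[OF TCm] 1 1])
    also have "\<dots> = ip TC TC" by (rule ip_relabel[OF tauU TCm TCm])
    finally show ?thesis .
  qed
  have IPx: "ip (Q j) (Q k) = X" if j: "j \<in> J" and k: "k \<in> J" and jk: "j \<noteq> k" for j k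
  proof -
    define k' where "k' = Transposition.transpose b j k"
    have "k' = j \<or> k' = b \<or> k' = k"
      by (cases "k = b"; cases "k = j") (auto simp: k'_def)
    then have k'J: "k' \<in> J" using bJ j k by auto
    have k'b: "k' \<noteq> b" using jk
      by (cases "k = b"; cases "k = j") (auto simp: k'_def)
    define p where "p = Transposition.transpose b j \<circ> Transposition.transpose c k'"
    have pJ: "p permutes J" unfolding p_def
      by (rule permutes_compose[OF tJ[OF bJ(2) k'J] tJ[OF bJ(1) j]])
    have pU: "p permutes UNIV" using permJ[OF pJ] .
    have pb: "p b = j" using assms(4) k'b by (simp add: p_def)
    have pc: "p c = k" by (simp add: p_def k'_def)
    define r where "r = Transposition.transpose b c"
    have rJ: "r permutes J" unfolding r_def by (rule tJ[OF bJ(1) bJ(2)])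
    have rb: "r b = c" by (simp add: r_def)
    have prJ: "p \<circ> r permutes J" by (rule permutes_compose[OF rJ pJ])
    have prb: "(p \<circ> r) b = k" by (simp add: rb pc)
    have 1: "AE x in lborel. Q j x = TC (relabel p x)" by (rule LemA[OF pJ j pb])
    have 2: "AE x in lborel. Q k x = TC (relabel (p \<circ> r) x)" by (rule LemA[OF prJ k prb])
    have "AE y in lborel. Q c y = TC (relabel r y)" by (rule LemA[OF rJ bJ(2) rb])
    then have 3: "AE x in lborel. Q c (relabel p x) = TC (relabel r (relabel p x))"
      by (rule AE_relabel[OF pU])
    have 4: "AE x in lborel. Q k x = Q c (relabel p x)"
      using 2 3 by eventually_elim (simp add: relabel_comp)
    have "ip (Q j) (Q k) = ip (\<lambda>x. TC (relabel p x)) (\<lambda>x. Q c (relabel p x))"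
      by (rule ip_cong[OF Qm[OF j] Qm[OF k] meas_relabel[OF TCm] meas_relabel[OF Qm[OF bJ(2)]] 1 4])
    also have "\<dots> = ip TC (Q c)" by (rule ip_relabel[OF pU TCm Qm[OF bJ(2)]])
    finally show ?thesis by (simp add: X_def)
  qed
  define n where "n = card J"
  have nC: "real n = real CARD('n) - 1"
    by (simp add: n_def J_def card_Diff_singleton of_nat_diff)
  have n2: "n \<ge> 2" using assms(1) by (simp add: n_def J_def card_Diff_singleton)
  have finJ: "finite J" by simp
  define m where "m = (of_nat n :: complex)"
  have m0: "m \<noteq> 0" using n2 by (simp add: m_def)
  define \<Phi> where "\<Phi> x = (\<Sum>j\<in>J. Q j x) / m" for x
  have intOj: "integrable lborel (\<lambda>x. cnj (Omega x) * Q j x)" if "j \<in> J" for j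
    by (rule L2_prod_int[OF assms(5) QL2[OF that]])
  have intjk: "integrable lborel (\<lambda>x. cnj (Q j x) * Q k x)" if "j \<in> J" "k \<in> J" for j k
    by (rule L2_prod_int[OF QL2[OF that(1)] QL2[OF that(2)]])
  have eqO: "cnj (Omega x) * \<Phi> x = (\<Sum>j\<in>J. cnj (Omega x) * Q j x) / m" for x
    by (simp add: \<Phi>_def sum_distrib_left)
  have intOP: "integrable lborel (\<lambda>x. cnj (Omega x) * \<Phi> x)"
    unfolding eqO using intOj by (intro integrable_divide_zero integrable_sum) auto
  have E1: "ip Omega TC = (\<integral>x. cnj (Omega x) * \<Phi> x \<partial>lborel)"
  proof -
    have "(\<integral>x. cnj (Omega x) * \<Phi> x \<partial>lborel) = (\<Sum>j\<in>J. ip Omega (Q j)) / m"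
      unfolding eqO integral_divide_zero
      by (subst Bochner_Integration.integral_sum) (auto simp: intOj ip_def)
    also have "\<dots> = (\<Sum>j\<in>J. ip Omega TC) / m" using IPO by simp
    also have "\<dots> = ip Omega TC" using m0 by (simp add: m_def n_def)
    finally show ?thesis by simp
  qed
  have eqP: "complex_of_real ((cmod (\<Phi> x))^2) = (\<Sum>j\<in>J. \<Sum>k\<in>J. cnj (Q j x) * Q k x) / (m * m)" for x
  proof -
    have "complex_of_real ((cmod (\<Phi> x))^2) = cnj (\<Phi> x) * \<Phi> x"
      by (metis complex_norm_square mult.commute of_real_power)
    also have "\<dots> = (cnj (\<Sum>j\<in>J. Q j x) * (\<Sum>k\<in>J. Q k x)) / (m * m)"
      by (simp add: \<Phi>_def m_def)
    also have "\<dots> = (\<Sum>j\<in>J. \<Sum>k\<in>J. cnj (Q j x) * Q k x) / (m * m)"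
      by (simp add: sum_product)
    finally show ?thesis .
  qed
  have intPc: "integrable lborel (\<lambda>x. complex_of_real ((cmod (\<Phi> x))^2))"
    unfolding eqP using intjk by (intro integrable_divide_zero integrable_sum) auto
  have intP: "integrable lborel (\<lambda>x. (cmod (\<Phi> x))^2)"
  proof -
    have "integrable lborel (\<lambda>x. Re (complex_of_real ((cmod (\<Phi> x))^2)))"
      by (rule integrable_bounded_linear[OF bounded_linear_Re intPc])
    then show ?thesis by simp
  qed
  have intO2: "integrable lborel (\<lambda>x. (cmod (Omega x))^2)" by (rule L2_int[OF assms(5)])
  have E2: "cmod (ip Omega TC) \<le> (\<integral>x. (cmod (Omega x))^2 \<partial>lborel) + (\<integral>x. (cmod (\<Phi> x))^2 \<partial>lborel)"
  proof -
    have "cmod (ip Omega TC) \<le> (\<integral>x. cmod (cnj (Omega x) * \<Phi> x) \<partial>lborel)"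
      unfolding E1 by (rule integral_norm_bound)
    also have "\<dots> \<le> (\<integral>x. (cmod (Omega x))^2 + (cmod (\<Phi> x))^2 \<partial>lborel)"
    proof (rule integral_mono)
      show "integrable lborel (\<lambda>x. cmod (cnj (Omega x) * \<Phi> x))"
        using intOP by (rule integrable_norm)
      show "integrable lborel (\<lambda>x. (cmod (Omega x))^2 + (cmod (\<Phi> x))^2)"
        using intO2 intP by (rule Bochner_Integration.integrable_add)
      fix x
      have "cmod (cnj (Omega x) * \<Phi> x) = cmod (Omega x) * cmod (\<Phi> x)" by (simp add: norm_mult)
      also have "\<dots> \<le> (cmod (Omega x))^2 + (cmod (\<Phi> x))^2" by (rule prod_bound) simp_all
      finally show "cmod (cnj (Omega x) * \<Phi> x) \<le> (cmod (Omega x))^2 + (cmod (\<Phi> x))^2" .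
    qed
    also have "\<dots> = (\<integral>x. (cmod (Omega x))^2 \<partial>lborel) + (\<integral>x. (cmod (\<Phi> x))^2 \<partial>lborel)"
      by (rule Bochner_Integration.integral_add[OF intO2 intP])
    finally show ?thesis .
  qed
  have nTC: "cmod (ip TC TC) = (nrm TC)^2"
    by (simp add: ip_self[OF TCL2] nrm_sq)
  have rowsum: "(\<Sum>k\<in>J. cmod (ip (Q j) (Q k))) = (nrm TC)^2 + real (n - 1) * cmod X"
    if j: "j \<in> J" for j
  proof -
    have "(\<Sum>k\<in>J. cmod (ip (Q j) (Q k))) = cmod (ip (Q j) (Q j)) + (\<Sum>k\<in>J - {j}. cmod (ip (Q j) (Q k)))"
      using j by (simp add: sum.remove)
    also have "(\<Sum>k\<in>J - {j}. cmod (ip (Q j) (Q k))) = (\<Sum>k\<in>J - {j}. cmod X)"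
      using IPx[OF j] by (intro sum.cong) auto
    also have "\<dots> = real (n - 1) * cmod X"
      using j by (simp add: n_def card_Diff_singleton)
    finally show ?thesis using IPd[OF j] nTC by simp
  qed
  have PhiInt: "complex_of_real (\<integral>x. (cmod (\<Phi> x))^2 \<partial>lborel)
      = (\<Sum>j\<in>J. \<Sum>k\<in>J. ip (Q j) (Q k)) / (m * m)"
  proof -
    have "complex_of_real (\<integral>x. (cmod (\<Phi> x))^2 \<partial>lborel)
        = (\<integral>x. complex_of_real ((cmod (\<Phi> x))^2) \<partial>lborel)"
      by (rule integral_complex_of_real[symmetric])
    also have "\<dots> = (\<Sum>j\<in>J. \<Sum>k\<in>J. ip (Q j) (Q k)) / (m * m)"
    proof -
      have "(\<integral>x. (\<Sum>j\<in>J. \<Sum>k\<in>J. cnj (Q j x) * Q k x) \<partial>lborel)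
          = (\<Sum>j\<in>J. \<integral>x. (\<Sum>k\<in>J. cnj (Q j x) * Q k x) \<partial>lborel)"
        by (rule Bochner_Integration.integral_sum) (use intjk in auto)
      also have "\<dots> = (\<Sum>j\<in>J. \<Sum>k\<in>J. ip (Q j) (Q k))"
      proof (rule sum.cong)
        fix j assume jJ: "j \<in> J"
        show "(\<integral>x. (\<Sum>k\<in>J. cnj (Q j x) * Q k x) \<partial>lborel) = (\<Sum>k\<in>J. ip (Q j) (Q k))"
          unfolding ip_def by (rule Bochner_Integration.integral_sum) (use intjk jJ in auto)
      qed simp
      finally show ?thesis unfolding eqP integral_divide_zero by simp
    qed
    finally show ?thesis .
  qed
  have E3: "(\<integral>x. (cmod (\<Phi> x))^2 \<partial>lborel) \<le> (nrm TC)^2 / real n + cmod X"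
  proof -
    have "(\<integral>x. (cmod (\<Phi> x))^2 \<partial>lborel) = cmod (complex_of_real (\<integral>x. (cmod (\<Phi> x))^2 \<partial>lborel))"
      by simp
    also have "\<dots> = cmod (\<Sum>j\<in>J. \<Sum>k\<in>J. ip (Q j) (Q k)) / (real n * real n)"
      unfolding PhiInt by (simp add: m_def norm_divide norm_mult)
    also have "\<dots> \<le> (\<Sum>j\<in>J. \<Sum>k\<in>J. cmod (ip (Q j) (Q k))) / (real n * real n)"
    proof (rule divide_right_mono)
      have "cmod (\<Sum>j\<in>J. \<Sum>k\<in>J. ip (Q j) (Q k)) \<le> (\<Sum>j\<in>J. cmod (\<Sum>k\<in>J. ip (Q j) (Q k)))"
        by (rule norm_sum)
      also have "\<dots> \<le> (\<Sum>j\<in>J. \<Sum>k\<in>J. cmod (ip (Q j) (Q k)))"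
        by (intro sum_mono norm_sum)
      finally show "cmod (\<Sum>j\<in>J. \<Sum>k\<in>J. ip (Q j) (Q k)) \<le> (\<Sum>j\<in>J. \<Sum>k\<in>J. cmod (ip (Q j) (Q k)))" .
    qed simp
    also have "(\<Sum>j\<in>J. \<Sum>k\<in>J. cmod (ip (Q j) (Q k))) = real n * ((nrm TC)^2 + real (n - 1) * cmod X)"
      using rowsum by (simp add: n_def)
    also have "real n * ((nrm TC)^2 + real (n - 1) * cmod X) / (real n * real n)
        = (nrm TC)^2 / real n + (real (n - 1) / real n) * cmod X"
      using n2 by (simp add: field_simps)
    also have "\<dots> \<le> (nrm TC)^2 / real n + cmod X"
    proof -
      have "real (n - 1) / real n \<le> 1" using n2 by simp
      then have "(real (n - 1) / real n) * cmod X \<le> 1 * cmod X"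
        by (rule mult_right_mono) simp
      then show ?thesis by simp
    qed
    finally show ?thesis .
  qed
  have "cmod (ip Omega TC) \<le> (nrm Omega)^2 + cmod X + (nrm TC)^2 / real n"
    using E2 E3 nrm_sq[of Omega] by simp
  then show ?thesis by (simp add: Qb[symmetric] Q_def X_def nC)
qed

end
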